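(* Consider the single-block on-chain auction game described in the context with $n=1$ (so $N=\{0,1\}$), $F=F_0=\mathrm{Uniform}[0,1]$, and reserve price $r>0$. Then the following strategy profile constitutes an equilibrium: (i) Bidder 1 bids truthfully, $b_1=v_1$, and tips $t_1(v_1)=v_1/2-r$ if $v_1>2r$ and $t_1(v_1)=0$ otherwise. (ii) Bidder 0, having observed bidder 1's tip $t_1$ and knowing his value $v_0$, bribes (i.e. offers the proposer a payment of $t_1$ in exchange for excluding bidder 1's bid) if $t_1+r\le v_0$, and does not bribe otherwise; moreover bidder 0 submits a nonzero bid in the auction if and only if he bribes. (iii) The proposer accepts bidder 0's bribe whenever it is offered and then excludes bidder 1's bid; otherwise the proposer includes both bids.
   Context: Single-block on-chain auction game. A seller has one indivisible good; there are $n+1$ buyers $N=\{0,1,\dots,n\}$, $n\ge 1$, with quasilinear utilities. Buyer $i$ has a private value $v_i$; $v_0$ is drawn from a distribution with CDF $F_0$, and $v_1,\dots,v_n$ are drawn i.i.d. from a distribution with CDF $F$, all independent, with supports $[0,1]$; $n,F,F_0$ are common knowledge. The seller runs a sealed-bid second-price auction with reserve price $r$ in which bids are accepted in a single block built by a single profit-maximizing proposer. Timing: (1) the seller announces the auction; (2) buyers learn their values; (3) buyers $1,\dots,n$ simultaneously submit a private (sealed) bid $b_i$ and a publicly observed tip $t_i\ge 0$; (4) buyer 0 observes the tips and his value $v_0$, and may make the proposer a take-it-or-leave-it offer of a subset $S\subseteq\{1,\dots,n\}$ and a payment $p$ to exclude the bids in $S$; buyer 0 also submits his own bid $b_0$;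 (5) the proposer accepts (including exactly the bids of $N\setminus S$ and receiving $p$) or rejects (including all bids); he accepts if and only if $p\ge\sum_{i\in S}t_i$; (6) the second-price auction is computed on the included bids: the highest included bid wins if it is at least $r$, paying the maximum of $r$ and the other included bids. A bidder pays his tip to the proposer iff his bid is included. Solution concept: perfect Bayesian equilibrium, restricted to profiles in which (a) bidders $1,\dots,n$ bid truthfully and use a common tipping function of their value, and (b) bidder 0 bids his value if, given the observed tips, he assigns positive probability to winning, and otherwise bids $0$ or does not bid. Such profiles are called equilibria. *)

theory Defs
  imports "HOL-Probability.Probability"
begin

text \<open>Bidder 0's offer to the proposer: None = no offer;
  Some (ex, p) = offer of payment p to exclude the set S, where S = {1} if ex and S = {} otherwise.\<close>
type_synonym offer = "(bool \<times> real) option"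

text \<open>The proposer accepts iff p is at least the sum of the tips of the bids in S.\<close>
definition accepted :: "real \<Rightarrow> offer \<Rightarrow> bool" where
  "accepted t1 off = (case off of None \<Rightarrow> False | Some (ex, p) \<Rightarrow> (if ex then t1 else 0) \<le> p)"

definition excluded1 :: "real \<Rightarrow> offer \<Rightarrow> bool" where
  "excluded1 t1 off = (case off of None \<Rightarrow> False | Some (ex, p) \<Rightarrow> accepted t1 off \<and> ex)"

definition bribe_paid :: "real \<Rightarrow> offer \<Rightarrow> real" where
  "bribe_paid t1 off = (case off of None \<Rightarrow> 0 | Some (ex, p) \<Rightarrow> (if accepted t1 off then p else 0))"

definition included_bid1 :: "real \<Rightarrow> offer \<Rightarrow> real \<Rightarrow> real option" where
  "included_bid1 t1 off b1 = (if excluded1 t1 off then None else Some b1)"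

text \<open>The highest included bid wins if it is at least r; ties are broken in favour of bidder 1.
  The winner pays the maximum of r and the other included bid.\<close>
definition wins0 :: "real \<Rightarrow> real option \<Rightarrow> real option \<Rightarrow> bool" where
  "wins0 r B0 B1 = (case B0 of None \<Rightarrow> False
      | Some x \<Rightarrow> r \<le> x \<and> (case B1 of None \<Rightarrow> True | Some y \<Rightarrow> y < x))"

definition wins1 :: "real \<Rightarrow> real option \<Rightarrow> real option \<Rightarrow> bool" where
  "wins1 r B0 B1 = (case B1 of None \<Rightarrow> False
      | Some y \<Rightarrow> r \<le> y \<and> (case B0 of None \<Rightarrow> True | Some x \<Rightarrow> x \<le> y))"

definition price :: "real \<Rightarrow> real option \<Rightarrow> real" where
  "price r B = (case B of None \<Rightarrow> r | Some z \<Rightarrow> max r z)"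

definition util0 :: "real \<Rightarrow> real \<Rightarrow> real \<Rightarrow> real \<Rightarrow> offer \<Rightarrow> real option \<Rightarrow> real" where
  "util0 r v0 t1 b1 off B0 = (let B1 = included_bid1 t1 off b1 in
     (if wins0 r B0 B1 then v0 - price r B1 else 0) - bribe_paid t1 off)"

definition util1 :: "real \<Rightarrow> real \<Rightarrow> real \<Rightarrow> real \<Rightarrow> offer \<Rightarrow> real option \<Rightarrow> real" where
  "util1 r v1 b1 t1 off B0 = (let B1 = included_bid1 t1 off b1 in
     (if wins1 r B0 B1 then v1 - price r B0 else 0) - (if B1 = None then 0 else t1))"

text \<open>Strategies: bidder 1 maps his value to (bid, tip); bidder 0 maps (observed tip, own value)
  to (offer, own bid).  Beliefs of bidder 0: observed tip \<mapsto> distribution of v1.\<close>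
type_synonym strat1 = "real \<Rightarrow> real \<times> real"
type_synonym strat0 = "real \<Rightarrow> real \<Rightarrow> offer \<times> real option"
type_synonym beliefs = "real \<Rightarrow> real measure"

definition valid_offer :: "offer \<Rightarrow> bool" where
  "valid_offer off = (case off of None \<Rightarrow> True | Some (ex, p) \<Rightarrow> 0 \<le> p)"

definition valid_bid0 :: "real option \<Rightarrow> bool" where
  "valid_bid0 B = (case B of None \<Rightarrow> True | Some x \<Rightarrow> 0 \<le> x)"

definition EU1 :: "real \<Rightarrow> strat0 \<Rightarrow> real \<Rightarrow> real \<Rightarrow> real \<Rightarrow> real" where
  "EU1 r \<sigma>0 v1 b t = integral {0..1} (\<lambda>v0. util1 r v1 b t (fst (\<sigma>0 t v0)) (snd (\<sigma>0 t v0)))"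

definition EU0 :: "real \<Rightarrow> strat1 \<Rightarrow> beliefs \<Rightarrow> real \<Rightarrow> real \<Rightarrow> offer \<Rightarrow> real option \<Rightarrow> real" where
  "EU0 r \<sigma>1 \<mu> t v0 off B0 = (\<integral>v1. util0 r v0 t (fst (\<sigma>1 v1)) off B0 \<partial>(\<mu> t))"

definition winprob0 :: "real \<Rightarrow> strat1 \<Rightarrow> beliefs \<Rightarrow> real \<Rightarrow> real \<Rightarrow> offer \<Rightarrow> real" where
  "winprob0 r \<sigma>1 \<mu> t v0 off =
     measure (\<mu> t) {v1. wins0 r (Some v0) (included_bid1 t off (fst (\<sigma>1 v1)))}"

text \<open>Bayes consistency: \<mu> is a regular conditional distribution of v1 given the tip,
  v1 ~ Uniform[0,1]: for Borel A, B, P(v1 \<in> A, tip \<in> B) = E[\<mu>_tip(A) ; tip \<in> B].\<close>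
definition consistent_beliefs :: "strat1 \<Rightarrow> beliefs \<Rightarrow> bool" where
  "consistent_beliefs \<sigma>1 \<mu> \<longleftrightarrow>
     (\<forall>t. prob_space (\<mu> t) \<and> sets (\<mu> t) = sets borel \<and> measure (\<mu> t) {0..1} = 1) \<and>
     (\<forall>A \<in> sets borel. \<forall>B \<in> sets borel.
        ((\<lambda>v1. measure (\<mu> (snd (\<sigma>1 v1))) A) has_integral
            measure lborel {v1 \<in> {0..1}. v1 \<in> A \<and> snd (\<sigma>1 v1) \<in> B})
          {v1 \<in> {0..1}. snd (\<sigma>1 v1) \<in> B})"

definition restriction_a :: "strat1 \<Rightarrow> bool" where
  "restriction_a \<sigma>1 \<longleftrightarrow> (\<forall>v1 \<in> {0..1}. fst (\<sigma>1 v1) = v1 \<and> 0 \<le> snd (\<sigma>1 v1))"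

definition restriction_b :: "real \<Rightarrow> strat1 \<Rightarrow> strat0 \<Rightarrow> beliefs \<Rightarrow> bool" where
  "restriction_b r \<sigma>1 \<sigma>0 \<mu> \<longleftrightarrow>
     (\<forall>t \<ge> 0. \<forall>v0 \<in> {0..1}.
        valid_offer (fst (\<sigma>0 t v0)) \<and>
        (if 0 < winprob0 r \<sigma>1 \<mu> t v0 (fst (\<sigma>0 t v0)) then snd (\<sigma>0 t v0) = Some v0
         else snd (\<sigma>0 t v0) \<in> {None, Some 0}))"

definition optimal1 :: "real \<Rightarrow> strat1 \<Rightarrow> strat0 \<Rightarrow> bool" where
  "optimal1 r \<sigma>1 \<sigma>0 \<longleftrightarrow>
     (\<forall>v1 \<in> {0..1}. \<forall>b \<ge> 0. \<forall>t \<ge> 0.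
        EU1 r \<sigma>0 v1 b t \<le> EU1 r \<sigma>0 v1 (fst (\<sigma>1 v1)) (snd (\<sigma>1 v1)))"

definition optimal0 :: "real \<Rightarrow> strat1 \<Rightarrow> strat0 \<Rightarrow> beliefs \<Rightarrow> bool" where
  "optimal0 r \<sigma>1 \<sigma>0 \<mu> \<longleftrightarrow>
     (\<forall>t \<ge> 0. \<forall>v0 \<in> {0..1}. \<forall>off B0. valid_offer off \<and> valid_bid0 B0 \<longrightarrow>
        EU0 r \<sigma>1 \<mu> t v0 off B0 \<le> EU0 r \<sigma>1 \<mu> t v0 (fst (\<sigma>0 t v0)) (snd (\<sigma>0 t v0)))"

text \<open>Equilibrium: perfect Bayesian equilibrium (with some consistent belief system)
  satisfying restrictions (a) and (b).  The proposer's behaviour is fixed by the rule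
  encoded in accepted.\<close>
definition equilibrium :: "real \<Rightarrow> strat1 \<Rightarrow> strat0 \<Rightarrow> bool" where
  "equilibrium r \<sigma>1 \<sigma>0 \<longleftrightarrow> restriction_a \<sigma>1 \<and>
     (\<exists>\<mu>. consistent_beliefs \<sigma>1 \<mu> \<and> restriction_b r \<sigma>1 \<sigma>0 \<mu> \<and>
          optimal1 r \<sigma>1 \<sigma>0 \<and> optimal0 r \<sigma>1 \<sigma>0 \<mu>)"

end

theory Submission
  imports Defs
begin

lemma step_integral:
  fixes s C :: real
  assumes "0 < s"
  shows "((\<lambda>v0. if s \<le> v0 then 0 else C) has_integral (min 1 s * C)) {0..1::real}"
proof (cases "1 \<le> s")
  case True
  have "((\<lambda>x. C) has_integral (min 1 s * C)) {0..1::real}"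
  proof -
    have "min 1 s * C = C" using True by simp
    moreover have "((\<lambda>x. C) has_integral C) {0..1::real}"
      using has_integral_const_real[of C 0 1] by simp
    ultimately show ?thesis by metis
  qed
  note h = this
  show ?thesis
    by (rule has_integral_spike_finite[where S="{1}", OF _ _ h]) (use True in auto)
next
  case False
  have a: "((\<lambda>v0. if s \<le> v0 then 0 else C) has_integral (s * C)) {0..s::real}"
  proof -
    have "((\<lambda>x. C) has_integral (s * C)) {0..s::real}"
      using has_integral_const_real[of C 0 s] assms by simp
    then have "((\<lambda>x. C) has_integral (s * C)) {0..s::real}" using assms by simp
    note h = this
    show ?thesis
      by (rule has_integral_spike_finite[where S="{s}", OF _ _ h]) auto
  qed
  have b: "((\<lambda>v0. if s \<le> v0 then 0 else C) has_integral 0) {s..1::real}"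
  proof -
    have "((\<lambda>x. 0::real) has_integral 0) {s..1::real}" by simp
    note h = this
    show ?thesis
      by (rule has_integral_spike_finite[where S="{}", OF _ _ h]) auto
  qed
  have "((\<lambda>v0. if s \<le> v0 then 0 else C) has_integral (s * C + 0)) {0..1}"
    by (rule has_integral_combine[OF _ _ a b]) (use assms False in auto)
  then show ?thesis using False by simp
qed

lemma arith1:
  fixes r v1 t g :: real
  assumes r: "0 < r" and v: "0 \<le> v1" "v1 \<le> 1" and t: "0 \<le> t"
    and g: "g \<le> (if r \<le> v1 then v1 - r else 0)"
  shows "min 1 (t + r) * (g - t) \<le>
         min 1 ((if 2 * r < v1 then v1 / 2 - r else 0) + r) *
           ((if r \<le> v1 then v1 - r else 0) - (if 2 * r < v1 then v1 / 2 - r else 0))"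
    (is "?L \<le> ?K")
proof -
  define a where "a = (if r \<le> v1 then v1 - r else 0)"
  have a0: "0 \<le> a" unfolding a_def by auto
  have K0: "0 \<le> ?K" using r v by (auto intro!: mult_nonneg_nonneg)
  have K1: "(t + r) * (a - t) \<le> ?K"
  proof (cases "2 * r < v1")
    case True
    then have "?K = (v1/2) * (v1/2)" using r v by (auto simp: a_def)
    moreover have "(t + r) * (a - t) \<le> (v1/2) * (v1/2)"
    proof -
      have "0 \<le> (t + r - v1/2)^2" by simp
      then show ?thesis using True r unfolding a_def by (auto simp: power2_eq_square algebra_simps)
    qed
    ultimately show ?thesis by simp
  next
    case False
    show ?thesis
    proof (cases "r \<le> v1")
      case True
      then have "?K = r * (v1 - r)" using False r v by auto
      moreover have "t * (v1 - 2*r - t) \<le> 0" using False t by (intro mult_nonneg_nonpos) auto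
      ultimately show ?thesis using True unfolding a_def by (auto simp: algebra_simps)
    next
      case f2: False
      then have "?K = 0" using False by auto
      moreover have "(t + r) * (a - t) \<le> 0" using f2 t r unfolding a_def
        by (intro mult_nonneg_nonpos) auto
      ultimately show ?thesis by linarith
    qed
  qed
  have m: "0 < min 1 (t + r)" "min 1 (t + r) \<le> t + r" using r t by auto
  have "?L \<le> min 1 (t + r) * (a - t)"
    using g m unfolding a_def by (intro mult_left_mono) auto
  also have "\<dots> \<le> ?K"
  proof (cases "a - t \<le> 0")
    case True
    then have "min 1 (t + r) * (a - t) \<le> 0" using m by (intro mult_nonneg_nonpos) auto
    then show ?thesis using K0 by linarith
  next
    case False
    then have "min 1 (t + r) * (a - t) \<le> (t + r) * (a - t)" using m by (intro mult_right_mono) auto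
    then show ?thesis using K1 by linarith
  qed
  finally show ?thesis .
qed


definition mu :: "real \<Rightarrow> beliefs" where
  "mu r t = (if t \<le> 0 then uniform_measure lborel {0..min 1 (2*r)} else return borel (min 1 (2*(t+r))))"

lemma mu_props:
  assumes r: "0 < r"
  shows "prob_space (mu r t)" "sets (mu r t) = sets borel" "space (mu r t) = UNIV"
    "measure (mu r t) {0..1} = 1"
proof -
  have c: "0 < min 1 (2*r)" using r by simp
  show "prob_space (mu r t)"
    unfolding mu_def using c by (auto intro!: prob_space_uniform_measure prob_space_return)
  show "sets (mu r t) = sets borel" unfolding mu_def by auto
  show "space (mu r t) = UNIV" unfolding mu_def by auto
  show "measure (mu r t) {0..1} = 1"
  proof (cases "t \<le> 0")
    case True
    have "{0..min 1 (2 * r)} \<inter> {0..1} = {0..min 1 (2*r)}" by auto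
    then show ?thesis using True c unfolding mu_def by (simp add: measure_uniform_measure)
  next
    case False
    then show ?thesis using r unfolding mu_def by (simp add: measure_return indicator_def)
  qed
qed

lemma EU1_eq:
  assumes r: "0 < r" and t: "0 \<le> t"
  shows "EU1 r (\<lambda>t1 v0. if t1 + r \<le> v0 then (Some (True, t1), Some v0) else (None, None)) v1 b t
      = min 1 (t + r) * ((if r \<le> b then v1 - r else 0) - t)"
proof -
  have "(\<lambda>v0. util1 r v1 b t
          (fst (if t + r \<le> v0 then (Some (True, t), Some v0) else (None, None)))
          (snd (if t + r \<le> v0 then (Some (True, t), Some v0) else (None, None))))
        = (\<lambda>v0. if t + r \<le> v0 then 0 else ((if r \<le> b then v1 - r else 0) - t))"
    by (auto simp: util1_def included_bid1_def excluded1_def accepted_def wins1_def price_def Let_def)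
  then show ?thesis unfolding EU1_def
    using integral_unique[OF step_integral[of "t + r" "(if r \<le> b then v1 - r else 0) - t"]] r t
    by simp
qed

lemma opt1:
  assumes r: "0 < r"
  shows "optimal1 r (\<lambda>v1. (v1, if 2 * r < v1 then v1 / 2 - r else 0))
           (\<lambda>t1 v0. if t1 + r \<le> v0 then (Some (True, t1), Some v0) else (None, None))"
  unfolding optimal1_def
proof (intro ballI allI impI)
  fix v1 b t :: real
  assume v: "v1 \<in> {0..1}" and b: "0 \<le> b" and t: "0 \<le> t"
  have ts: "0 \<le> (if 2 * r < v1 then v1 / 2 - r else 0)" by auto
  show "EU1 r (\<lambda>t1 v0. if t1 + r \<le> v0 then (Some (True, t1), Some v0) else (None, None)) v1 b t
       \<le> EU1 r (\<lambda>t1 v0. if t1 + r \<le> v0 then (Some (True, t1), Some v0) else (None, None)) v1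
           (fst (v1, if 2 * r < v1 then v1 / 2 - r else 0))
           (snd (v1, if 2 * r < v1 then v1 / 2 - r else 0))"
    unfolding fst_conv snd_conv EU1_eq[OF r t] EU1_eq[OF r ts]
    by (rule arith1) (use r v t in auto)
qed


lemma int_le_const:
  fixes f :: "real \<Rightarrow> real"
  assumes "prob_space M" "AE x in M. f x \<le> K" "0 \<le> K"
  shows "integral\<^sup>L M f \<le> K"
proof (cases "integrable M f")
  case True
  interpret prob_space M by fact
  have "integral\<^sup>L M f \<le> integral\<^sup>L M (\<lambda>_. K)"
    by (rule integral_mono_AE[OF True _ assms(2)]) simp
  then show ?thesis by (simp add: prob_space)
next
  case False
  then show ?thesis using assms(3) by (simp add: not_integrable_integral_eq)
qed

lemma util0_bound:
  assumes r: "0 < r" and t: "0 \<le> t" and v0: "v0 \<in> {0..1}" and vo: "valid_offer off"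
    and H: "t \<le> 0 \<or> v1 = min 1 (2*(t+r))"
  shows "util0 r v0 t v1 off B0 \<le> (if t + r \<le> v0 then v0 - r - t else 0)"
  using assms
  by (auto simp: util0_def included_bid1_def excluded1_def accepted_def wins0_def price_def
      bribe_paid_def valid_offer_def Let_def split: option.splits if_splits)


lemma opt0:
  assumes r: "0 < r"
  shows "optimal0 r (\<lambda>v1. (v1, if 2 * r < v1 then v1 / 2 - r else 0))
           (\<lambda>t1 v0. if t1 + r \<le> v0 then (Some (True, t1), Some v0) else (None, None)) (mu r)"
  unfolding optimal0_def
proof (intro allI impI ballI)
  fix t v0 :: real and off B0
  assume t: "0 \<le> t" and v0: "v0 \<in> {0..1}" and vb: "valid_offer off \<and> valid_bid0 B0"
  define K where "K = (if t + r \<le> v0 then v0 - r - t else 0)"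
  have K0: "0 \<le> K" unfolding K_def by auto
  have P: "prob_space (mu r t)" using mu_props[OF r] by auto
  have val: "util0 r v0 t v1
          (fst (if t + r \<le> v0 then (Some (True, t), Some v0) else (None, None)))
          (snd (if t + r \<le> v0 then (Some (True, t), Some v0) else (None, None))) = K" for v1
    unfolding K_def using t
    by (auto simp: util0_def included_bid1_def excluded1_def accepted_def wins0_def price_def
      bribe_paid_def Let_def)
  have rhs: "EU0 r (\<lambda>v1. (v1, if 2 * r < v1 then v1 / 2 - r else 0)) (mu r) t v0
     (fst (if t + r \<le> v0 then (Some (True, t), Some v0) else (None, None)))
     (snd (if t + r \<le> v0 then (Some (True, t), Some v0) else (None, None))) = K"
    unfolding EU0_def fst_conv val using P by (simp add: prob_space.prob_space)
  have AE: "AE v1 in mu r t. util0 r v0 t v1 off B0 \<le> K"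
  proof (cases "t \<le> 0")
    case True
    show ?thesis
      by (rule AE_I2) (use util0_bound[OF r t v0] vb True in \<open>auto simp: K_def\<close>)
  next
    case False
    define d where "d = min 1 (2*(t+r))"
    have mu: "mu r t = return borel d" using False unfolding mu_def d_def by simp
    have N: "UNIV - {d} \<in> null_sets (mu r t)"
      unfolding mu by (intro null_setsI) (auto simp: emeasure_return)
    show ?thesis
      by (rule AE_I'[OF N]) (use util0_bound[OF r t v0] vb in \<open>auto simp: K_def d_def\<close>)
  qed
  show "EU0 r (\<lambda>v1. (v1, if 2 * r < v1 then v1 / 2 - r else 0)) (mu r) t v0 off B0
     \<le> EU0 r (\<lambda>v1. (v1, if 2 * r < v1 then v1 / 2 - r else 0)) (mu r) t v0
     (fst (if t + r \<le> v0 then (Some (True, t), Some v0) else (None, None)))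
     (snd (if t + r \<le> v0 then (Some (True, t), Some v0) else (None, None)))"
    unfolding rhs unfolding EU0_def fst_conv
    by (rule int_le_const[OF P AE K0])
qed

lemma resb:
  assumes r: "0 < r"
  shows "restriction_b r (\<lambda>v1. (v1, if 2 * r < v1 then v1 / 2 - r else 0))
           (\<lambda>t1 v0. if t1 + r \<le> v0 then (Some (True, t1), Some v0) else (None, None)) (mu r)"
  unfolding restriction_b_def
proof (intro allI impI ballI conjI)
  fix t v0 :: real
  assume t: "0 \<le> t" and v0: "v0 \<in> {0..1}"
  show "valid_offer (fst (if t + r \<le> v0 then (Some (True, t), Some v0) else (None, None)))"
    using t by (auto simp: valid_offer_def)
  have P: "prob_space (mu r t)" and sp: "space (mu r t) = UNIV" using mu_props[OF r] by auto
  show "if 0 < winprob0 r (\<lambda>v1. (v1, if 2 * r < v1 then v1 / 2 - r else 0)) (mu r) t v0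
                (fst (if t + r \<le> v0 then (Some (True, t), Some v0) else (None, None)))
        then snd (if t + r \<le> v0 then (Some (True, t), Some v0) else (None, None)) = Some v0
        else snd (if t + r \<le> v0 then (Some (True, t), Some v0) else (None, None)) \<in> {None, Some 0}"
  proof (cases "t + r \<le> v0")
    case True
    have "{v1. wins0 r (Some v0) (included_bid1 t (Some (True, t)) v1)} = space (mu r t)"
      using True t sp by (auto simp: wins0_def included_bid1_def excluded1_def accepted_def)
    then have "winprob0 r (\<lambda>v1. (v1, if 2 * r < v1 then v1 / 2 - r else 0)) (mu r) t v0
                (Some (True, t)) = 1"
      unfolding winprob0_def fst_conv using P by (simp add: prob_space.prob_space)
    then show ?thesis using True by simp
  next
    case False
    have "winprob0 r (\<lambda>v1. (v1, if 2 * r < v1 then v1 / 2 - r else 0)) (mu r) t v0 None = 0"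
    proof (cases "r \<le> v0")
      case False
      then show ?thesis
        by (simp add: winprob0_def wins0_def included_bid1_def excluded1_def)
    next
      case True
      then have tp: "\<not> t \<le> 0" using \<open>\<not> t + r \<le> v0\<close> by auto
      define d where "d = min 1 (2*(t+r))"
      have mu: "mu r t = return borel d" using tp unfolding mu_def d_def by simp
      have set: "{v1. wins0 r (Some v0) (included_bid1 t None v1)} = {..<v0}"
        using True by (auto simp: wins0_def included_bid1_def excluded1_def)
      have "d \<notin> {..<v0}" using v0 \<open>\<not> t + r \<le> v0\<close> r t by (auto simp: d_def)
      then show ?thesis unfolding winprob0_def fst_conv set mu
        by (simp add: measure_return)
    qed
    then show ?thesis using False by simp
  qed
qed


lemma cons_main:
  assumes r: "0 < r" and A: "A \<in> sets borel" and B: "B \<in> sets borel"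
  shows "((\<lambda>v1. measure (mu r (if 2*r < v1 then v1/2 - r else 0)) A) has_integral
           measure lborel {v1 \<in> {0..1}. v1 \<in> A \<and> (if 2*r < v1 then v1/2 - r else 0) \<in> B})
         {v1 \<in> {0..1::real}. (if 2*r < v1 then v1/2 - r else 0) \<in> B}"
proof -
  define c where "c = min 1 (2*r)"
  define \<alpha> where "\<alpha> = measure lborel ({0..c} \<inter> A) / c"
  define P where "P = (if 0 \<in> B then {0..c} else {})"
  define Q where "Q = {0..1} \<inter> {2*r<..} \<inter> ((\<lambda>x. x/2 - r) -` B \<inter> UNIV) \<inter> A"
  have c: "0 < c" "c \<le> 1" "c \<le> 2*r" using r unfolding c_def by auto
  have Ab: "A \<in> sets lborel" using A by simp
  have f_eq: "measure (mu r (if 2*r < v1 then v1/2 - r else 0)) A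
      = (if 2*r < v1 then indicator A v1 else \<alpha>)" if v: "v1 \<in> {0..1}" for v1
  proof (cases "2*r < v1")
    case True
    then have "mu r (if 2*r < v1 then v1/2 - r else 0) = return borel v1"
      using v unfolding mu_def by auto
    then show ?thesis using True A by (simp add: measure_return)
  next
    case False
    then have "mu r (if 2*r < v1 then v1/2 - r else 0) = uniform_measure lborel {0..c}"
      unfolding mu_def c_def by auto
    moreover have "measure (uniform_measure lborel {0..c}) A = measure lborel ({0..c} \<inter> A) / measure lborel {0..c}"
      by (rule measure_uniform_measure) (use c Ab in auto)
    ultimately show ?thesis using False c unfolding \<alpha>_def by simp
  qed
  have pw: "(if x \<in> {v1 \<in> {0..1::real}. (if 2*r < v1 then v1/2 - r else 0) \<in> B}
             then measure (mu r (if 2*r < x then x/2 - r else 0)) A else 0)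
         = \<alpha> * indicator P x + indicator Q x" for x
  proof (cases "x \<in> {0..1}")
    case True
    have "x \<le> 2*r \<Longrightarrow> x \<le> c" using True unfolding c_def by auto
    then show ?thesis using f_eq[OF True] c True
      by (auto simp: P_def Q_def indicator_def)
  next
    case False
    then show ?thesis using c by (auto simp: P_def Q_def indicator_def)
  qed
  have Qs: "Q \<in> sets borel"
  proof -
    have "(\<lambda>x::real. x/2 - r) \<in> borel_measurable borel" by measurable
    then have "(\<lambda>x::real. x/2 - r) -` B \<inter> space borel \<in> sets borel"
      using B by (rule measurable_sets)
    then show ?thesis unfolding Q_def using A by auto
  qed
  have Ps: "P \<in> sets borel" unfolding P_def by auto
  have fin: "emeasure lborel S < \<infinity>" if "S \<subseteq> {0..1}" "S \<in> sets borel" for S :: "real set"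
  proof -
    have "emeasure lborel S \<le> emeasure lborel {0..1::real}"
      by (rule emeasure_mono) (use that in auto)
    then show ?thesis using ennreal_one_less_top le_less_trans by (simp; blast)
  qed
  have Psub: "P \<subseteq> {0..1}" using c unfolding P_def by auto
  have Qsub: "Q \<subseteq> {0..1}" unfolding Q_def by auto
  have ind: "((indicator S :: real \<Rightarrow> real) has_integral measure lborel S) UNIV"
    if "S \<subseteq> {0..1}" "S \<in> sets borel" for S :: "real set"
  proof -
    have "((\<lambda>x. 1::real) has_integral measure lborel S) S"
      by (rule has_integral_measure_lborel) (use that fin in auto)
    then have "((\<lambda>x. if x \<in> S then 1::real else 0) has_integral measure lborel S) UNIV"
      using has_integral_restrict_UNIV[of S "\<lambda>x. 1::real"] by blast
    moreover have "(indicator S :: real \<Rightarrow> real) = (\<lambda>x. if x \<in> S then 1 else 0)"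
      by (rule ext) (simp add: indicator_def)
    ultimately show ?thesis by metis
  qed
  have comb: "((\<lambda>x. \<alpha> * indicator P x + indicator Q x) has_integral
                (\<alpha> * measure lborel P + measure lborel Q)) UNIV"
    by (intro has_integral_add has_integral_mult_right ind Psub Qsub Ps Qs)
  have T: "{v1 \<in> {0..1}. v1 \<in> A \<and> (if 2*r < v1 then v1/2 - r else 0) \<in> B} = (P \<inter> A) \<union> Q"
    using c by (auto simp: P_def Q_def c_def)
  have disj: "(P \<inter> A) \<inter> Q = {}" using c by (auto simp: P_def Q_def c_def)
  have PA: "\<alpha> * measure lborel P = measure lborel (P \<inter> A)"
    using c by (auto simp: P_def \<alpha>_def Int_commute)
  have meas: "measure lborel {v1 \<in> {0..1}. v1 \<in> A \<and> (if 2*r < v1 then v1/2 - r else 0) \<in> B}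
      = \<alpha> * measure lborel P + measure lborel Q"
    unfolding T PA
  proof (rule measure_Union)
    have "P \<inter> A \<subseteq> {0..1}" using Psub by auto
    moreover have "P \<inter> A \<in> sets borel" using Ps A by auto
    ultimately show "emeasure lborel (P \<inter> A) \<noteq> \<infinity>" using fin[of "P \<inter> A"] by simp
    show "emeasure lborel Q \<noteq> \<infinity>" using fin[OF Qsub Qs] by simp
  qed (use Ps Qs A disj in auto)
  show ?thesis
    unfolding meas
    by (subst has_integral_restrict_UNIV[symmetric]) (unfold pw, rule comb)
qed


lemma cons:
  assumes r: "0 < r"
  shows "consistent_beliefs (\<lambda>v1. (v1, if 2 * r < v1 then v1 / 2 - r else 0)) (mu r)"
  unfolding consistent_beliefs_def
proof (intro conjI)
  show "\<forall>t. prob_space (mu r t) \<and> sets (mu r t) = sets borel \<and> measure (mu r t) {0..1} = 1"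
    using mu_props[OF r] by blast
  show "\<forall>A\<in>sets borel. \<forall>B\<in>sets borel.
     ((\<lambda>v1. measure (mu r (snd (v1, if 2 * r < v1 then v1 / 2 - r else 0))) A) has_integral
      measure lborel {v1 \<in> {0..1}. v1 \<in> A \<and> snd (v1, if 2 * r < v1 then v1 / 2 - r else 0) \<in> B})
      {v1 \<in> {0..1}. snd (v1, if 2 * r < v1 then v1 / 2 - r else 0) \<in> B}"
    using cons_main[OF r] by simp
qed

theorem proposition2:
  fixes r :: real
  assumes "0 < r"
  shows "equilibrium r
           (\<lambda>v1. (v1, if 2 * r < v1 then v1 / 2 - r else 0))
           (\<lambda>t1 v0. if t1 + r \<le> v0 then (Some (True, t1), Some v0) else (None, None))
         \<and> (\<forall>t1 \<ge> 0. \<forall>v0.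
              (t1 + r \<le> v0 \<longrightarrow> accepted t1 (Some (True, t1)) \<and> excluded1 t1 (Some (True, t1))) \<and>
              (\<not> t1 + r \<le> v0 \<longrightarrow> \<not> excluded1 t1 None))"
proof (intro conjI)
  show "equilibrium r
           (\<lambda>v1. (v1, if 2 * r < v1 then v1 / 2 - r else 0))
           (\<lambda>t1 v0. if t1 + r \<le> v0 then (Some (True, t1), Some v0) else (None, None))"
    unfolding equilibrium_def
  proof (intro conjI exI)
    show "restriction_a (\<lambda>v1. (v1, if 2 * r < v1 then v1 / 2 - r else 0))"
      by (auto simp: restriction_a_def)
  qed (use cons[OF assms] resb[OF assms] opt1[OF assms] opt0[OF assms] in auto)
  show "\<forall>t1 \<ge> 0. \<forall>v0.
              (t1 + r \<le> v0 \<longrightarrow> accepted t1 (Some (True, t1)) \<and> excluded1 t1 (Some (True, t1))) \<and>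
              (\<not> t1 + r \<le> v0 \<longrightarrow> \<not> excluded1 t1 None)"
    by (auto simp: accepted_def excluded1_def)
qed

end
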